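(* Let $M$ be a connected Coxeter diagram over $I$ with no subdiagram of type $\mathsf{A}_3$, and let $\Gamma=(V,\tau,* )$ be a geometry over $I$ satisfying Properties (F), (P) and (D). Let $\Gamma'=(V',\tau,* )$ be obtained from $\Gamma$ by either of the following procedures. Procedure B: Let $i,j$ be adjacent nodes with $m:=m_{i,j}<\infty$ and $X$ a flag of type $J$ with $i,j\notin J$ such that every node of $I\setminus\{i,j\}$ adjacent to $i$ or $j$ lies in $J$. Let $x,y$ be elements of types in $\{i,j\}$ in the residue of $X$, of the same type if $m$ is odd and of different types if $m$ is even, at distance at least $m+1$ (possibly infinite) in the incidence graph of the residue of $X$ restricted to types $i,j$. Add new elements $x_2,\dots,x_{m-1}$ so that $(x_1:=x,x_2,\dots,x_{m-1},x_m:=y)$ is a path whose types alternate between $i$ and $j$. Procedure C: Let $X$ be a flag of corank at least $2$ whose residue is disconnected, let $i\neq j$ be in $I\setminus\tau(X)$, and let $x,y$ be elements of types in $\{i,j\}$ lying in different connected components of the residue of $X$. Add new elements forming a path $\gamma$ from $x$ to $y$ of length (number of edges) at least $4$ whose types alternate between $i$ and $j$. In both procedures the incidences among old elements are unchanged, and each newly added element is incident exactly with its neighbours on the path, with the elements of $X$, and with every element (old or new) whose type is different from its own and not adjacent to it in $M$. Then $\Gamma'$ satisfies Properties (F), (P) and (D).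
   Context: A geometry over $I$ is a triple $(V,\tau,* )$ with $\tau:V\to I$ and $*$ a symmetric relation such that elements of equal type are incident iff equal. A flag is a set of pairwise incident elements; its corank is $|I\setminus\tau(X)|$; the residue of a flag $X$ is the geometry over $I\setminus\tau(X)$ formed by the elements outside $X$ incident with all of $X$. Coxeter diagram $M$ with matrix $(m_{i,j})$; nodes $i\ne j$ are adjacent iff $m_{i,j}\ge3$; a subdiagram of type $\mathsf{A}_3$ is three nodes $i,j,k$ with $m_{i,j}=m_{j,k}=3$, $m_{i,k}=2$. A rank 2 geometry (viewed as bipartite incidence graph) is without $k$-gons if it has no cycle of length $2k$. (F) Elements of distinct types that are not adjacent in $M$ are always incident. (P) For adjacent nodes $i,j$ and any flag $X$ of type $J$ with $i,j\notin J$ such that every node of $I\setminus\{i,j\}$ adjacent to $i$ or $j$ lies in $J$, the restriction of the residue of $X$ to types $i,j$ is without $t$-gons for all $t<m_{i,j}$. (D) If $i\ne j$ and $m_{i,j}\ge4$, the restriction of the geometry to types $i$ and $j$ is without digons. *)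

theory Defs
  imports Main "HOL-Library.Extended_Nat"
begin

definition coxeter_diagram :: "'i set \<Rightarrow> ('i \<Rightarrow> 'i \<Rightarrow> enat) \<Rightarrow> bool" where
  "coxeter_diagram I m \<longleftrightarrow> finite I \<and> (\<forall>i\<in>I. m i i = 1) \<and>
     (\<forall>i\<in>I. \<forall>j\<in>I. m i j = m j i \<and> (i \<noteq> j \<longrightarrow> m i j \<ge> 2))"

definition cadj :: "('i \<Rightarrow> 'i \<Rightarrow> enat) \<Rightarrow> 'i \<Rightarrow> 'i \<Rightarrow> bool" where
  "cadj m i j \<longleftrightarrow> i \<noteq> j \<and> m i j \<ge> 3"

definition diagram_connected :: "'i set \<Rightarrow> ('i \<Rightarrow> 'i \<Rightarrow> enat) \<Rightarrow> bool" where
  "diagram_connected I m \<longleftrightarrow>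
     (\<forall>i\<in>I. \<forall>j\<in>I. (i, j) \<in> {(a, b). a \<in> I \<and> b \<in> I \<and> cadj m a b}\<^sup>*)"

definition no_A3 :: "'i set \<Rightarrow> ('i \<Rightarrow> 'i \<Rightarrow> enat) \<Rightarrow> bool" where
  "no_A3 I m \<longleftrightarrow> \<not> (\<exists>i\<in>I. \<exists>j\<in>I. \<exists>k\<in>I. i \<noteq> j \<and> j \<noteq> k \<and> i \<noteq> k \<and>
       m i j = 3 \<and> m j k = 3 \<and> m i k = 2)"

definition geometry :: "'i set \<Rightarrow> 'v set \<Rightarrow> ('v \<Rightarrow> 'i) \<Rightarrow> ('v \<Rightarrow> 'v \<Rightarrow> bool) \<Rightarrow> bool" where
  "geometry I V \<tau> inc \<longleftrightarrow> (\<forall>v\<in>V. \<tau> v \<in> I) \<and> (\<forall>a\<in>V. \<forall>b\<in>V. inc a b = inc b a) \<and>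
     (\<forall>a\<in>V. \<forall>b\<in>V. \<tau> a = \<tau> b \<longrightarrow> (inc a b \<longleftrightarrow> a = b))"

definition flag :: "'v set \<Rightarrow> ('v \<Rightarrow> 'v \<Rightarrow> bool) \<Rightarrow> 'v set \<Rightarrow> bool" where
  "flag V inc X \<longleftrightarrow> X \<subseteq> V \<and> (\<forall>a\<in>X. \<forall>b\<in>X. inc a b)"

definition corank :: "'i set \<Rightarrow> ('v \<Rightarrow> 'i) \<Rightarrow> 'v set \<Rightarrow> nat" where
  "corank I \<tau> X = card (I - \<tau> ` X)"

definition residue :: "'v set \<Rightarrow> ('v \<Rightarrow> 'v \<Rightarrow> bool) \<Rightarrow> 'v set \<Rightarrow> 'v set" where
  "residue V inc X = {v \<in> V - X. \<forall>x\<in>X. inc v x}"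

definition restrict_types :: "'v set \<Rightarrow> ('v \<Rightarrow> 'i) \<Rightarrow> 'i set \<Rightarrow> 'v set" where
  "restrict_types S \<tau> J = {v \<in> S. \<tau> v \<in> J}"

definition iedge :: "('v \<Rightarrow> 'v \<Rightarrow> bool) \<Rightarrow> 'v \<Rightarrow> 'v \<Rightarrow> bool" where
  "iedge inc a b \<longleftrightarrow> a \<noteq> b \<and> inc a b"

definition walk :: "'v set \<Rightarrow> ('v \<Rightarrow> 'v \<Rightarrow> bool) \<Rightarrow> 'v \<Rightarrow> 'v \<Rightarrow> nat \<Rightarrow> bool" where
  "walk S inc a b n \<longleftrightarrow> (\<exists>p. p 0 = a \<and> p n = b \<and> (\<forall>k\<le>n. p k \<in> S) \<and>
      (\<forall>k<n. iedge inc (p k) (p (Suc k))))"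

definition inc_connected :: "'v set \<Rightarrow> ('v \<Rightarrow> 'v \<Rightarrow> bool) \<Rightarrow> bool" where
  "inc_connected S inc \<longleftrightarrow> (\<forall>a\<in>S. \<forall>b\<in>S. \<exists>n. walk S inc a b n)"

definition has_cycle :: "'v set \<Rightarrow> ('v \<Rightarrow> 'v \<Rightarrow> bool) \<Rightarrow> nat \<Rightarrow> bool" where
  "has_cycle S inc n \<longleftrightarrow> n \<ge> 3 \<and> (\<exists>c. inj_on c {..<n} \<and> c ` {..<n} \<subseteq> S \<and>
      (\<forall>k<n. iedge inc (c k) (c (Suc k mod n))))"

definition without_gons :: "'v set \<Rightarrow> ('v \<Rightarrow> 'v \<Rightarrow> bool) \<Rightarrow> nat \<Rightarrow> bool" where
  "without_gons S inc k \<longleftrightarrow> \<not> has_cycle S inc (2 * k)"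

definition propF :: "'i set \<Rightarrow> ('i \<Rightarrow> 'i \<Rightarrow> enat) \<Rightarrow> 'v set \<Rightarrow> ('v \<Rightarrow> 'i) \<Rightarrow> ('v \<Rightarrow> 'v \<Rightarrow> bool) \<Rightarrow> bool" where
  "propF I m V \<tau> inc \<longleftrightarrow>
     (\<forall>a\<in>V. \<forall>b\<in>V. \<tau> a \<noteq> \<tau> b \<and> \<not> cadj m (\<tau> a) (\<tau> b) \<longrightarrow> inc a b)"

definition good_flag_for :: "'i set \<Rightarrow> ('i \<Rightarrow> 'i \<Rightarrow> enat) \<Rightarrow> 'v set \<Rightarrow> ('v \<Rightarrow> 'i) \<Rightarrow> ('v \<Rightarrow> 'v \<Rightarrow> bool)
     \<Rightarrow> 'i \<Rightarrow> 'i \<Rightarrow> 'v set \<Rightarrow> bool" where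
  "good_flag_for I m V \<tau> inc i j X \<longleftrightarrow> flag V inc X \<and> i \<notin> \<tau> ` X \<and> j \<notin> \<tau> ` X \<and>
     (\<forall>k\<in>I - {i, j}. cadj m i k \<or> cadj m j k \<longrightarrow> k \<in> \<tau> ` X)"

definition propP :: "'i set \<Rightarrow> ('i \<Rightarrow> 'i \<Rightarrow> enat) \<Rightarrow> 'v set \<Rightarrow> ('v \<Rightarrow> 'i) \<Rightarrow> ('v \<Rightarrow> 'v \<Rightarrow> bool) \<Rightarrow> bool" where
  "propP I m V \<tau> inc \<longleftrightarrow>
     (\<forall>i\<in>I. \<forall>j\<in>I. cadj m i j \<longrightarrow> (\<forall>X. good_flag_for I m V \<tau> inc i j X \<longrightarrow>
        (\<forall>t::nat. enat t < m i j \<longrightarrow>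
           without_gons (restrict_types (residue V inc X) \<tau> {i, j}) inc t)))"

definition propD :: "'i set \<Rightarrow> ('i \<Rightarrow> 'i \<Rightarrow> enat) \<Rightarrow> 'v set \<Rightarrow> ('v \<Rightarrow> 'i) \<Rightarrow> ('v \<Rightarrow> 'v \<Rightarrow> bool) \<Rightarrow> bool" where
  "propD I m V \<tau> inc \<longleftrightarrow>
     (\<forall>i\<in>I. \<forall>j\<in>I. i \<noteq> j \<and> m i j \<ge> 4 \<longrightarrow> without_gons (restrict_types V \<tau> {i, j}) inc 2)"

definition path_extension :: "'i set \<Rightarrow> ('i \<Rightarrow> 'i \<Rightarrow> enat) \<Rightarrow> 'v set \<Rightarrow> ('v \<Rightarrow> 'i) \<Rightarrow> ('v \<Rightarrow> 'v \<Rightarrow> bool)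
     \<Rightarrow> 'v set \<Rightarrow> 'i \<Rightarrow> 'i \<Rightarrow> (nat \<Rightarrow> 'v) \<Rightarrow> nat \<Rightarrow> 'v set \<Rightarrow> ('v \<Rightarrow> 'v \<Rightarrow> bool) \<Rightarrow> bool" where
  "path_extension I m V \<tau> inc X i j p n V' inc' \<longleftrightarrow>
     p 0 \<in> V \<and> p n \<in> V \<and>
     inj_on p {1..<n} \<and> (\<forall>k\<in>{1..<n}. p k \<notin> V) \<and>
     V' = V \<union> p ` {1..<n} \<and>
     (\<forall>k\<le>n. \<tau> (p k) \<in> {i, j}) \<and> (\<forall>k<n. \<tau> (p k) \<noteq> \<tau> (p (Suc k))) \<and>
     (\<forall>a\<in>V'. \<forall>b\<in>V'. inc' a b \<longleftrightarrow>
        (if a \<in> V \<and> b \<in> V then inc a b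
         else a = b \<or> (\<exists>k<n. {a, b} = {p k, p (Suc k)}) \<or>
              (a \<notin> V \<and> b \<in> X) \<or> (b \<notin> V \<and> a \<in> X) \<or>
              (\<tau> a \<noteq> \<tau> b \<and> \<not> cadj m (\<tau> a) (\<tau> b))))"

(* Procedure B; the path (x_1,...,x_mm) is p 0, ..., p (mm - 1) *)
definition procedureB :: "'i set \<Rightarrow> ('i \<Rightarrow> 'i \<Rightarrow> enat) \<Rightarrow> 'v set \<Rightarrow> ('v \<Rightarrow> 'i) \<Rightarrow> ('v \<Rightarrow> 'v \<Rightarrow> bool)
     \<Rightarrow> 'v set \<Rightarrow> ('v \<Rightarrow> 'v \<Rightarrow> bool) \<Rightarrow> bool" where
  "procedureB I m V \<tau> inc V' inc' \<longleftrightarrow>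
     (\<exists>i j X x y mm p. i \<in> I \<and> j \<in> I \<and> cadj m i j \<and> m i j = enat mm \<and>
        good_flag_for I m V \<tau> inc i j X \<and>
        x \<in> restrict_types (residue V inc X) \<tau> {i, j} \<and>
        y \<in> restrict_types (residue V inc X) \<tau> {i, j} \<and>
        (odd mm \<longleftrightarrow> \<tau> x = \<tau> y) \<and>
        (\<forall>n\<le>mm. \<not> walk (restrict_types (residue V inc X) \<tau> {i, j}) inc x y n) \<and>
        p 0 = x \<and> p (mm - 1) = y \<and>
        path_extension I m V \<tau> inc X i j p (mm - 1) V' inc')"

definition procedureC :: "'i set \<Rightarrow> ('i \<Rightarrow> 'i \<Rightarrow> enat) \<Rightarrow> 'v set \<Rightarrow> ('v \<Rightarrow> 'i) \<Rightarrow> ('v \<Rightarrow> 'v \<Rightarrow> bool)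
     \<Rightarrow> 'v set \<Rightarrow> ('v \<Rightarrow> 'v \<Rightarrow> bool) \<Rightarrow> bool" where
  "procedureC I m V \<tau> inc V' inc' \<longleftrightarrow>
     (\<exists>X i j x y n p. flag V inc X \<and> corank I \<tau> X \<ge> 2 \<and>
        \<not> inc_connected (residue V inc X) inc \<and>
        i \<in> I - \<tau> ` X \<and> j \<in> I - \<tau> ` X \<and> i \<noteq> j \<and>
        x \<in> residue V inc X \<and> y \<in> residue V inc X \<and> \<tau> x \<in> {i, j} \<and> \<tau> y \<in> {i, j} \<and>
        (\<forall>l. \<not> walk (residue V inc X) inc x y l) \<and>
        n \<ge> 4 \<and> p 0 = x \<and> p n = y \<and>
        path_extension I m V \<tau> inc X i j p n V' inc')"

end

theory Submission
  imports Defs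
begin


lemma cyc_D:
  assumes L3: "3 \<le> L" and inj: "inj_on c {..<L}" and img: "c ` {..<L} \<subseteq> S"
    and e: "\<forall>k<L. iedge R (c k) (c (Suc k mod L))"
  shows "\<exists>D::int \<Rightarrow> 'a. (\<forall>k<L. D (int k) = c k) \<and> (\<forall>z. D z \<in> S) \<and> (\<forall>z. iedge R (D z) (D (z+1))) \<and>
           (\<forall>a b. D a = D b \<longleftrightarrow> a mod int L = b mod int L)"
proof -
  define D where "D z = c (nat (z mod int L))" for z
  have Lpos: "int L > 0" using L3 by simp
  have nl: "nat (z mod int L) < L" for z using Lpos
    by (metis Euclidean_Rings.pos_mod_bound nat_less_iff pos_mod_sign)
  have 1: "D z \<in> S" for z using img nl unfolding D_def by blast
  have 2: "iedge R (D z) (D (z+1))" for z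
  proof -
    let ?k = "nat (z mod int L)"
    have "int (Suc ?k mod L) = (z mod int L + 1) mod int L"
      using Lpos by (simp add: of_nat_mod add.commute)
    also have "\<dots> = (z+1) mod int L" by (simp add: mod_add_left_eq)
    finally have "nat ((z+1) mod int L) = Suc ?k mod L" by simp
    then show ?thesis using e nl[of z] unfolding D_def by metis
  qed
  have 3: "D a = D b \<longleftrightarrow> a mod int L = b mod int L" for a b
  proof -
    have "D a = D b \<longleftrightarrow> nat (a mod int L) = nat (b mod int L)"
      unfolding D_def using inj nl by (metis inj_on_eq_iff lessThan_iff)
    also have "\<dots> \<longleftrightarrow> a mod int L = b mod int L" using Lpos
      by (metis eq_nat_nat_iff pos_mod_sign)
    finally show ?thesis .
  qed
  have 4: "D (int k) = c k" if "k < L" for k using that unfolding D_def by simp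
  show ?thesis using 1 2 3 4 by blast
qed

lemma fwd:
  fixes D :: "int \<Rightarrow> 'v" and p :: "nat \<Rightarrow> 'v"
  assumes ne2: "\<And>z. D (z+2) \<noteq> D z"
  and H: "\<And>z l. 1 \<le> l \<Longrightarrow> l < n \<Longrightarrow> D z = p l \<Longrightarrow> {D (z-1), D (z+1)} = {p (l-1), p (Suc l)}"
  and r: "D r = p l" "D (r+1) = p (Suc l)" "l < n"
  shows "e \<le> n - l \<Longrightarrow> D (r + int e) = p (l + e)"
proof -
  have main: "e + 1 \<le> n - l \<longrightarrow> D (r + int e) = p (l + e) \<and> D (r + int e + 1) = p (Suc (l + e))" for e
  proof (induction e)
    case 0 then show ?case using r by simp
  next
    case (Suc e)
    show ?case
    proof
      assume a: "Suc e + 1 \<le> n - l"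
      with Suc have ih: "D (r + int e) = p (l + e)" "D (r + int e + 1) = p (Suc (l + e))" by auto
      have "{D (r + int e + 1 - 1), D (r + int e + 1 + 1)} = {p (Suc (l + e) - 1), p (Suc (Suc (l + e)))}"
        using H[of "Suc (l+e)" "r + int e + 1"] a ih by simp
      then have s: "{D (r + int e), D (r + int e + 2)} = {p (l + e), p (Suc (Suc (l + e)))}"
        by (simp add: add.assoc)
      have "D (r + int e + 2) \<noteq> D (r + int e)" using ne2 by simp
      then have "D (r + int e + 2) = p (Suc (Suc (l + e)))" using s ih by (metis doubleton_eq_iff)
      then show "D (r + int (Suc e)) = p (l + Suc e) \<and> D (r + int (Suc e) + 1) = p (Suc (l + Suc e))"
        using ih by (simp add: ac_simps)
    qed
  qed
  assume "e \<le> n - l"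
  then show ?thesis
  proof (cases e)
    case 0 then show ?thesis using r by simp
  next
    case (Suc e')
    then show ?thesis using main[of e'] \<open>e \<le> n - l\<close> by (simp add: ac_simps)
  qed
qed




lemma seg:
  fixes D :: "int \<Rightarrow> 'v" and p :: "nat \<Rightarrow> 'v"
  assumes ne2: "\<And>z. D (z+2) \<noteq> D z"
  and H: "\<And>z l. 1 \<le> l \<Longrightarrow> l < n \<Longrightarrow> D z = p l \<Longrightarrow> {D (z-1), D (z+1)} = {p (l-1), p (Suc l)}"
  and r: "D r = p l" "D (r+1) = p (Suc l)" "D (r - 1) = p (l - 1)" "1 \<le> l" "l < n"
  shows "\<forall>k\<le>n. D (r - int l + int k) = p k"
proof (intro allI impI)
  fix k assume k: "k \<le> n"
  show "D (r - int l + int k) = p k"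
  proof (cases "l \<le> k")
    case True
    have kl: "k - l \<le> n - l" using k by simp
    have "D (r + int (k - l)) = p (l + (k - l))"
      by (rule fwd[OF ne2 H r(1) r(2) r(5) kl])
    then show ?thesis using True by (simp add: of_nat_diff algebra_simps)
  next
    case False
    define D' where "D' z = D (- z)" for z
    define p' where "p' k = p (n - k)" for k
    have ne2': "D' (z+2) \<noteq> D' z" for z unfolding D'_def using ne2[of "-(z+2)"] by (metis add.commute minus_add_cancel minus_add_distrib)
    have H': "{D' (z-1), D' (z+1)} = {p' (l'-1), p' (Suc l')}" if "1 \<le> l'" "l' < n" "D' z = p' l'" for z l'
    proof -
      have "{D (-z - 1), D (-z + 1)} = {p (n - l' - 1), p (Suc (n - l'))}"
        using H[of "n - l'" "-z"] that unfolding D'_def p'_def by simp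
      moreover have "n - (l' - 1) = Suc (n - l')" "n - Suc l' = n - l' - 1" using that by auto
      moreover have "- (z - 1) = - z + 1" "- (z + 1) = - z - 1" by simp_all
      ultimately show ?thesis unfolding D'_def p'_def by (metis insert_commute)
    qed
    have r1: "D' (-r) = p' (n - l)" unfolding D'_def p'_def using r by simp
    have r2: "D' (-r + 1) = p' (Suc (n - l))" unfolding D'_def p'_def using r
      by (simp add: Suc_diff_le)
    have lk: "l - k \<le> n - (n - l)" using r(5) False by simp
    have nl: "n - l < n" using r(4,5) by simp
    have "D' (-r + int (l - k)) = p' (n - l + (l - k))"
      by (rule fwd[OF ne2' H' r1 r2 nl lk])
    then show ?thesis using False k r(5) unfolding D'_def p'_def by (simp add: of_nat_diff algebra_simps)
  qed
qed

lemma absorb: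
  fixes D :: "int \<Rightarrow> 'v" and p :: "nat \<Rightarrow> 'v"
  assumes ne2: "\<And>z. D (z+2) \<noteq> D z"
  and H: "\<And>z l. 1 \<le> l \<Longrightarrow> l < n \<Longrightarrow> D z = p l \<Longrightarrow> {D (z-1), D (z+1)} = {p (l-1), p (Suc l)}"
  and r: "D r = p l" "1 \<le> l" "l < n"
  shows "\<exists>s. (\<forall>k\<le>n. D (s + int k) = p k) \<or> (\<forall>k\<le>n. D (- (s + int k)) = p k)"
proof -
  have "{D (r-1), D (r+1)} = {p (l-1), p (Suc l)}" using H[OF r(2,3,1)] .
  then consider "D (r-1) = p (l-1)" "D (r+1) = p (Suc l)" | "D (r-1) = p (Suc l)" "D (r+1) = p (l-1)"
    by (metis doubleton_eq_iff)
  then show ?thesis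
  proof cases
    case 1 then show ?thesis using seg[OF ne2 H r(1) 1(2) 1(1) r(2,3)] by blast
  next
    case 2
    define D' where "D' z = D (- z)" for z
    have ne2': "D' (z+2) \<noteq> D' z" for z unfolding D'_def using ne2[of "-(z+2)"] by (metis add.commute minus_add_cancel minus_add_distrib)
    have H': "{D' (z-1), D' (z+1)} = {p (l'-1), p (Suc l')}" if "1 \<le> l'" "l' < n" "D' z = p l'" for z l'
    proof -
      have "{D (-z - 1), D (-z + 1)} = {p (l'-1), p (Suc l')}" using H[of l' "-z"] that unfolding D'_def by blast
      moreover have "- (z - 1) = - z + 1" "- (z + 1) = - z - 1" by simp_all
      ultimately show ?thesis unfolding D'_def by (metis insert_commute)
    qed
    have "D' (-r) = p l" "D' (-r+1) = p (Suc l)" "D' (-r - 1) = p (l-1)"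
    proof -
      have "- (-r + 1) = r - 1" "- (-r - 1) = r + 1" by simp_all
      then show "D' (-r) = p l" "D' (-r+1) = p (Suc l)" "D' (-r - 1) = p (l-1)"
        unfolding D'_def using r 2 by (simp_all add: add.commute)
    qed
    from seg[OF ne2' H' this r(2,3)] show ?thesis unfolding D'_def by blast
  qed
qed

lemma extract_walk:
  fixes E :: "int \<Rightarrow> 'v" and p :: "nat \<Rightarrow> 'v"
  assumes L3: "3 \<le> L" and Emod: "\<And>a b. E a = E b \<longleftrightarrow> a mod int L = b mod int L"
  and Ep: "\<And>k. k \<le> n \<Longrightarrow> E (s + int k) = p k"
  and old: "\<And>k. 1 \<le> k \<Longrightarrow> k < n \<Longrightarrow> p 0 \<noteq> p k"
  and xy: "p 0 \<noteq> p n"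
  shows "n < L" "E (s + int L) = p 0"
    "\<forall>k l. k \<le> L - n \<longrightarrow> 1 \<le> l \<longrightarrow> l < n \<longrightarrow> E (s + int n + int k) \<noteq> p l"
proof -
  have per: "E (s + int L) = E s" using Emod by simp
  show "n < L"
  proof (rule ccontr)
    assume "\<not> n < L"
    then have "p L = p 0" using Ep[of L] Ep[of 0] per by simp
    then show False using old[of L] xy L3 \<open>\<not> n < L\<close> by (cases "L = n") auto
  qed
  then show "E (s + int L) = p 0" using per Ep[of 0] by simp
  show "\<forall>k l. k \<le> L - n \<longrightarrow> 1 \<le> l \<longrightarrow> l < n \<longrightarrow> E (s + int n + int k) \<noteq> p l"
  proof (intro allI impI notI)
  fix k l assume kl: "k \<le> L - n" "1 \<le> l" "l < n"
    assume "E (s + int n + int k) = p l"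
    then have "E (s + int n + int k) = E (s + int l)" using Ep[of l] kl by simp
    then have "(s + int n + int k) mod int L = (s + int l) mod int L" using Emod by blast
    then have "int L dvd ((s + int n + int k) - (s + int l))" using mod_eq_dvd_iff by blast
    moreover have "(s + int n + int k) - (s + int l) = int n + int k - int l" by simp
    ultimately have "int L dvd (int n + int k - int l)" by simp
    moreover have "0 < int n + int k - int l" "int n + int k - int l < int L"
      using kl \<open>n < L\<close> by auto
    ultimately show False using zdvd_imp_le[of "int L" "int n + int k - int l"] by linarith
  qed
qed




lemma cadj_sym: "coxeter_diagram I m \<Longrightarrow> a \<in> I \<Longrightarrow> b \<in> I \<Longrightarrow> cadj m a b = cadj m b a"
  unfolding coxeter_diagram_def cadj_def by metis

lemma m_sym: "coxeter_diagram I m \<Longrightarrow> a \<in> I \<Longrightarrow> b \<in> I \<Longrightarrow> m a b = m b a"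
  unfolding coxeter_diagram_def by metis

lemma noncadj_2: "coxeter_diagram I m \<Longrightarrow> a \<in> I \<Longrightarrow> b \<in> I \<Longrightarrow> a \<noteq> b \<Longrightarrow> \<not> cadj m a b \<Longrightarrow> m a b = 2"
proof -
  assume c: "coxeter_diagram I m" and a: "a \<in> I" "b \<in> I" "a \<noteq> b" "\<not> cadj m a b"
  then have "m a b \<ge> 2" "\<not> m a b \<ge> 3" unfolding coxeter_diagram_def cadj_def by auto
  then show "m a b = 2"
    by (cases "m a b") (auto simp: numeral_eq_enat)
qed

lemma cadj_not3: "cadj m a b \<Longrightarrow> m a b \<noteq> 3 \<Longrightarrow> m a b \<ge> 4"
  unfolding cadj_def by (cases "m a b") (auto simp: numeral_eq_enat)

lemma walk_mono: "walk S R a b l \<Longrightarrow> S \<subseteq> T \<Longrightarrow> walk T R a b l"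
  unfolding walk_def by blast

lemma has_cycle_mono: "has_cycle S R l \<Longrightarrow> S \<subseteq> T \<Longrightarrow> has_cycle T R l"
  unfolding has_cycle_def by blast

lemma walk_rev:
  assumes "walk S R a b l" and sym: "\<And>x y. x \<in> S \<Longrightarrow> y \<in> S \<Longrightarrow> R x y \<Longrightarrow> R y x"
  shows "walk S R b a l"
proof -
  from assms obtain q where q: "q 0 = a" "q l = b" "\<forall>k\<le>l. q k \<in> S" "\<forall>k<l. iedge R (q k) (q (Suc k))"
    unfolding walk_def by blast
  define q' where "q' k = q (l - k)" for k
  have "q' 0 = b" "q' l = a" using q unfolding q'_def by auto
  moreover have "\<forall>k\<le>l. q' k \<in> S" using q unfolding q'_def by auto
  moreover have "iedge R (q' k) (q' (Suc k))" if "k < l" for k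
  proof -
    have e: "iedge R (q (l - Suc k)) (q (Suc (l - Suc k)))" using q that by auto
    have "Suc (l - Suc k) = l - k" using that by auto
    then have "iedge R (q (l - Suc k)) (q (l - k))" using e by simp
    moreover have "q (l - Suc k) \<in> S" "q (l - k) \<in> S" using q by auto
    ultimately show ?thesis unfolding q'_def iedge_def using sym by metis
  qed
  ultimately show ?thesis unfolding walk_def by blast
qed

lemma cycle4:
  assumes "a \<in> S" "b \<in> S" "c \<in> S" "d \<in> S"
    "a \<noteq> b" "a \<noteq> c" "a \<noteq> d" "b \<noteq> c" "b \<noteq> d" "c \<noteq> d"
    "R a b" "R b c" "R c d" "R d a"
  shows "has_cycle S R 4"
proof -
  define f where "f k = (if k = 0 then a else if k = 1 then b else if k = (2::nat) then c else d)" for k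
  have u: "{..<4::nat} = {0,1,2,3}" by auto
  have "inj_on f {..<4}" unfolding u f_def inj_on_def using assms by auto
  moreover have "f ` {..<4} \<subseteq> S" unfolding u f_def using assms by auto
  moreover have "\<forall>k\<in>{0,1,2,3::nat}. iedge R (f k) (f (Suc k mod 4))"
    unfolding f_def iedge_def using assms by auto
  then have "\<forall>k<4. iedge R (f k) (f (Suc k mod 4))" using u by (metis lessThan_iff)
  ultimately show ?thesis unfolding has_cycle_def by auto
qed




locale pext =
  fixes I :: "'i set" and m :: "'i \<Rightarrow> 'i \<Rightarrow> enat" and V :: "'v set" and \<tau> :: "'v \<Rightarrow> 'i"
    and inc :: "'v \<Rightarrow> 'v \<Rightarrow> bool" and X :: "'v set" and i j :: 'i and p :: "nat \<Rightarrow> 'v"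
    and n :: nat and V' :: "'v set" and inc' :: "'v \<Rightarrow> 'v \<Rightarrow> bool"
  assumes cox: "coxeter_diagram I m" and noA3: "no_A3 I m" and geo: "geometry I V \<tau> inc"
    and F: "propF I m V \<tau> inc" and P: "propP I m V \<tau> inc" and D: "propD I m V \<tau> inc"
    and pe: "path_extension I m V \<tau> inc X i j p n V' inc'"
    and Xf: "flag V inc X" and Xi: "i \<notin> \<tau> ` X" and Xj: "j \<notin> \<tau> ` X" and ij: "i \<noteq> j"
    and iI: "i \<in> I" and jI: "j \<in> I" and n2: "2 \<le> n" and xy: "p 0 \<noteq> p n"
    and n2m3: "n = 2 \<Longrightarrow> m i j = 3"
    and xR: "p 0 \<in> restrict_types (residue V inc X) \<tau> {i, j}"
    and yR: "p n \<in> restrict_types (residue V inc X) \<tau> {i, j}"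
    and nowalk: "\<And>t l. enat t < m i j \<Longrightarrow> l + n = 2 * t \<Longrightarrow>
        \<not> walk (restrict_types (residue V inc X) \<tau> {i, j}) inc (p 0) (p n) l"
begin

lemma p0V: "p 0 \<in> V" and pnV: "p n \<in> V" and pinj: "inj_on p {1..<n}"
  and pnew: "\<And>k. 1 \<le> k \<Longrightarrow> k < n \<Longrightarrow> p k \<notin> V"
  and V'eq: "V' = V \<union> p ` {1..<n}"
  and ptype: "\<And>k. k \<le> n \<Longrightarrow> \<tau> (p k) \<in> {i, j}"
  and palt: "\<And>k. k < n \<Longrightarrow> \<tau> (p k) \<noteq> \<tau> (p (Suc k))"
  and incdef: "\<And>a b. a \<in> V' \<Longrightarrow> b \<in> V' \<Longrightarrow> inc' a b \<longleftrightarrow>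
        (if a \<in> V \<and> b \<in> V then inc a b
         else a = b \<or> (\<exists>k<n. {a, b} = {p k, p (Suc k)}) \<or>
              (a \<notin> V \<and> b \<in> X) \<or> (b \<notin> V \<and> a \<in> X) \<or>
              (\<tau> a \<noteq> \<tau> b \<and> \<not> cadj m (\<tau> a) (\<tau> b)))"
  using pe unfolding path_extension_def by auto

lemma VI: "v \<in> V \<Longrightarrow> \<tau> v \<in> I" using geo unfolding geometry_def by auto
lemma incsymV: "a \<in> V \<Longrightarrow> b \<in> V \<Longrightarrow> inc a b = inc b a" using geo unfolding geometry_def by auto
lemma sameV: "a \<in> V \<Longrightarrow> b \<in> V \<Longrightarrow> \<tau> a = \<tau> b \<Longrightarrow> inc a b \<longleftrightarrow> a = b"
  using geo unfolding geometry_def by auto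

lemma XV: "X \<subseteq> V" using Xf unfolding flag_def by auto
lemma Xtype: "w \<in> X \<Longrightarrow> \<tau> w \<noteq> i \<and> \<tau> w \<noteq> j" using Xi Xj by force
lemma Xuniq: "w \<in> X \<Longrightarrow> w' \<in> X \<Longrightarrow> \<tau> w = \<tau> w' \<Longrightarrow> w = w'"
  using Xf sameV XV unfolding flag_def by blast

lemma pV': "k \<le> n \<Longrightarrow> p k \<in> V'"
  using V'eq p0V pnV by (cases "k = 0 \<or> k = n") auto

lemma V'cases: "v \<in> V' \<Longrightarrow> v \<in> V \<or> (\<exists>l. 1 \<le> l \<and> l < n \<and> v = p l)"
  using V'eq by auto

lemma V'I: "v \<in> V' \<Longrightarrow> \<tau> v \<in> I"
proof -
  assume "v \<in> V'"
  then consider "v \<in> V" | l where "1 \<le> l" "l < n" "v = p l" using V'cases by blast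
  then show ?thesis
  proof cases
    case 1 then show ?thesis using VI by blast
  next
    case 2 then show ?thesis using ptype[of l] iI jI by auto
  qed
qed

lemma inc'_old: "a \<in> V \<Longrightarrow> b \<in> V \<Longrightarrow> inc' a b = inc a b"
  using incdef V'eq by auto

lemma inc'_sym: "a \<in> V' \<Longrightarrow> b \<in> V' \<Longrightarrow> inc' a b = inc' b a"
proof -
  assume ab: "a \<in> V'" "b \<in> V'"
  then have c: "cadj m (\<tau> a) (\<tau> b) = cadj m (\<tau> b) (\<tau> a)" using cadj_sym[OF cox] V'I by blast
  show ?thesis
  proof (cases "a \<in> V \<and> b \<in> V")
    case True then show ?thesis using incsymV[of a b] inc'_old by auto
  next
    case False
    then show ?thesis using incdef[OF ab] incdef[OF ab(2,1)] c by (auto simp: insert_commute)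
  qed
qed

lemma newinc:
  assumes l: "1 \<le> l" "l < n" and b: "b \<in> V'" "inc' (p l) b" "b \<noteq> p l"
  shows "b = p (l - 1) \<or> b = p (Suc l) \<or> b \<in> X \<or> (\<tau> (p l) \<noteq> \<tau> b \<and> \<not> cadj m (\<tau> (p l)) (\<tau> b))"
proof -
  have pl: "p l \<in> V'" "p l \<notin> V" using pV' pnew l by auto
  have "(\<exists>k<n. {p l, b} = {p k, p (Suc k)}) \<or> b \<in> X \<or> (\<tau> (p l) \<noteq> \<tau> b \<and> \<not> cadj m (\<tau> (p l)) (\<tau> b))"
    using incdef[OF pl(1) b(1)] b pl XV by auto
  moreover have "b = p (l - 1) \<or> b = p (Suc l)" if "k < n" "{p l, b} = {p k, p (Suc k)}" for k
  proof -
    from that b(3) have "(p l = p k \<and> b = p (Suc k)) \<or> (p l = p (Suc k) \<and> b = p k)"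
      by (metis doubleton_eq_iff)
    then show ?thesis
    proof
      assume a: "p l = p k \<and> b = p (Suc k)"
      have "k \<noteq> 0"
      proof
        assume "k = 0" then show False using a pl(2) p0V by simp
      qed
      then have "k = l" using a pinj l that unfolding inj_on_def by fastforce
      then show ?thesis using a by simp
    next
      assume a: "p l = p (Suc k) \<and> b = p k"
      have "Suc k \<noteq> n" using a pl pnV by auto
      then have "Suc k = l" using a pinj l that unfolding inj_on_def by fastforce
      then show ?thesis using a by auto
    qed
  qed
  ultimately show ?thesis by blast
qed

lemma same': "a \<in> V' \<Longrightarrow> b \<in> V' \<Longrightarrow> inc' a b \<Longrightarrow> \<tau> a = \<tau> b \<Longrightarrow> a = b"
proof -
  have new: "a = b" if "1 \<le> l" "l < n" "a = p l" "b \<in> V'" "inc' a b" "\<tau> a = \<tau> b" for a b l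
  proof (rule ccontr)
    assume "a \<noteq> b"
    then have "b = p (l - 1) \<or> b = p (Suc l) \<or> b \<in> X \<or> (\<tau> (p l) \<noteq> \<tau> b \<and> \<not> cadj m (\<tau> (p l)) (\<tau> b))"
      using newinc[of l b] that by auto
    moreover have "\<tau> (p (l-1)) \<noteq> \<tau> (p l)" using palt[of "l-1"] that by auto
    moreover have "\<tau> (p (Suc l)) \<noteq> \<tau> (p l)" using palt[of l] that by auto
    moreover have "\<tau> (p l) \<in> {i,j}" using ptype[of l] that by auto
    ultimately show False using that Xtype[of b] by auto
  qed
  assume a: "a \<in> V'" "b \<in> V'" "inc' a b" "\<tau> a = \<tau> b"
  show "a = b"
  proof (cases "a \<in> V \<and> b \<in> V")
    case True then show ?thesis using a inc'_old sameV by auto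
  next
    case False
    then show ?thesis
    proof (cases "a \<in> V")
      case True
      then obtain l where "1 \<le> l" "l < n" "b = p l" using False a V'cases by blast
      then show ?thesis using new[of l b a] a inc'_sym by auto
    next
      case False
      then obtain l where "1 \<le> l" "l < n" "a = p l" using a V'cases by blast
      then show ?thesis using new[of l a b] a by auto
    qed
  qed
qed

theorem F': "propF I m V' \<tau> inc'"
  unfolding propF_def
proof (intro ballI impI)
  fix a b assume ab: "a \<in> V'" "b \<in> V'" "\<tau> a \<noteq> \<tau> b \<and> \<not> cadj m (\<tau> a) (\<tau> b)"
  show "inc' a b"
  proof (cases "a \<in> V \<and> b \<in> V")
    case True then show ?thesis using F ab inc'_old unfolding propF_def by auto
  next
    case False then show ?thesis using incdef[OF ab(1,2)] ab by auto
  qed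
qed

end


context pext begin

lemma finish:
  fixes E :: "int \<Rightarrow> 'v"
  assumes L3: "3 \<le> L" and Emod: "\<And>a b. E a = E b \<longleftrightarrow> a mod int L = b mod int L"
  and Eadj: "\<And>z. iedge inc' (E z) (E (z+1))" and Ein: "\<And>z. E z \<in> S" and Ssub: "S \<subseteq> V'"
  and Ep: "\<And>k. k \<le> n \<Longrightarrow> E (s + int k) = p k"
  shows "n < L \<and> p ` {..n} \<subseteq> S \<and> walk (S \<inter> V) inc (p n) (p 0) (L - n)"
proof -
  have old: "p 0 \<noteq> p k" if "1 \<le> k" "k < n" for k using pnew[OF that] p0V by auto
  note ex = extract_walk[OF L3 Emod Ep old xy]
  have nL: "n < L" using ex(1) by blast
  have img: "p ` {..n} \<subseteq> S" using Ep Ein by (metis atMost_iff image_subsetI)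
  define q where "q k = E (s + int n + int k)" for k
  have q0: "q 0 = p n" unfolding q_def using Ep[of n] by simp
  have qL: "q (L - n) = p 0" unfolding q_def using ex(2) nL by (simp add: of_nat_diff)
  have qV: "q k \<in> V" if "k \<le> L - n" for k
  proof -
    have "q k \<in> V'" using Ein Ssub unfolding q_def by blast
    then show ?thesis using V'cases ex(3) that unfolding q_def by blast
  qed
  have qS: "q k \<in> S" for k unfolding q_def using Ein by blast
  have qe: "iedge inc (q k) (q (Suc k))" if "k < L - n" for k
  proof -
    have "iedge inc' (q k) (q (Suc k))" using Eadj[of "s + int n + int k"] unfolding q_def by (simp add: ac_simps)
    then show ?thesis using qV[of k] qV[of "Suc k"] that inc'_old unfolding iedge_def by auto
  qed
  have "walk (S \<inter> V) inc (p n) (p 0) (L - n)"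
    unfolding walk_def using q0 qL qV qS qe by (intro exI[of _ q]) auto
  then show ?thesis using nL img by blast
qed

lemma cycle_new:
  assumes cyc: "has_cycle S inc' L" and Ssub: "S \<subseteq> V'" and St: "\<forall>v\<in>S. \<tau> v \<in> {a, b}"
    and ab: "cadj m a b" "a \<in> I" "b \<in> I"
  shows "has_cycle (S \<inter> V) inc L \<or> (n < L \<and> p ` {..n} \<subseteq> S \<and> walk (S \<inter> V) inc (p n) (p 0) (L - n))"
proof -
  from cyc obtain c where L3: "3 \<le> L" and inj: "inj_on c {..<L}" and img: "c ` {..<L} \<subseteq> S"
    and e: "\<forall>k<L. iedge inc' (c k) (c (Suc k mod L))" unfolding has_cycle_def by blast
  show ?thesis
  proof (cases "\<forall>k<L. c k \<in> V")
    case True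
    have "\<forall>k<L. iedge inc (c k) (c (Suc k mod L))"
    proof (intro allI impI)
      fix k assume "k < L"
      moreover have "Suc k mod L < L" using L3 by simp
      ultimately show "iedge inc (c k) (c (Suc k mod L))" using e True inc'_old unfolding iedge_def by auto
    qed
    then have "has_cycle (S \<inter> V) inc L" unfolding has_cycle_def using L3 inj img True by blast
    then show ?thesis by blast
  next
    case False
    then obtain k where k: "k < L" "c k \<notin> V" by blast
    then have "c k \<in> V'" using img Ssub by blast
    then obtain l0 where l0: "1 \<le> l0" "l0 < n" "c k = p l0" using V'cases k by blast
    obtain D where D0: "\<forall>k<L. D (int k) = c k" and DS: "\<forall>z. D z \<in> S"
      and Dadj: "\<forall>z. iedge inc' (D z) (D (z+1))" and Dmod: "\<forall>a b. D a = D b \<longleftrightarrow> a mod int L = b mod int L"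
      using cyc_D[OF L3 inj img e] by blast
    have DV': "D z \<in> V'" for z using DS Ssub by blast
    have Dne: "D x \<noteq> D y" if "0 < y - x" "y - x < int L" for x y
    proof
      assume "D x = D y"
      then have "x mod int L = y mod int L" using Dmod by blast
      then have "int L dvd (y - x)" using mod_eq_dvd_iff by metis
      then show False using zdvd_imp_le[of "int L" "y - x"] that by linarith
    qed
    have ne2: "D (z+2) \<noteq> D z" for z
    proof -
      have "(2::int) < int L" using L3 by simp
      then have "D z \<noteq> D (z+2)" by (intro Dne) auto
      then show ?thesis by metis
    qed
    have adjsym: "iedge inc' (D z) (D (z - 1))" for z
      using Dadj[rule_format, of "z - 1"] inc'_sym[OF DV'[of z] DV'[of "z-1"]] unfolding iedge_def by auto
    have H: "{D (z-1), D (z+1)} = {p (l-1), p (Suc l)}" if hl: "1 \<le> l" "l < n" "D z = p l" for z l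
    proof -
      have pn: "p l \<notin> V" using pnew hl by blast
      have tz: "\<tau> (D z) \<in> {a,b}" "\<tau> (D (z-1)) \<in> {a,b}" "\<tau> (D (z+1)) \<in> {a,b}" using St DS by blast+
      have t1: "\<tau> (D (z-1)) \<noteq> \<tau> (D z)" using same'[OF DV' DV'] adjsym[of z] unfolding iedge_def by metis
      have t2: "\<tau> (D (z+1)) \<noteq> \<tau> (D z)" using same'[OF DV' DV'] Dadj unfolding iedge_def by metis
      have teq: "\<tau> (D (z-1)) = \<tau> (D (z+1))" using tz t1 t2 by auto
      have cj: "cadj m (\<tau> (D z)) (\<tau> (D (z+1)))"
        using tz t2 ab cadj_sym[OF cox ab(2,3)] by auto
      have "(2::int) < int L" using L3 by simp
      then have ne: "D (z-1) \<noteq> D (z+1)" by (intro Dne) auto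
      have opts: "y = p (l - 1) \<or> y = p (Suc l) \<or> y \<in> X" if "y = D (z-1) \<or> y = D (z+1)" for y
      proof -
        have "inc' (p l) y" "y \<noteq> p l" "y \<in> V'"
          using that adjsym[of z] Dadj[rule_format, of z] hl(3) DV' unfolding iedge_def by auto
        from newinc[OF hl(1,2) this(3,1,2)] show ?thesis using that cj teq hl(3) by auto
      qed
      have notX: "\<not> (D (z-1) \<in> X \<and> D (z+1) \<in> X)" using Xuniq teq ne by blast
      have ty: "\<tau> (p (l-1)) \<in> {i,j}" "\<tau> (p (Suc l)) \<in> {i,j}" using ptype hl by auto
      have notmix: "y \<notin> X" if "y = p (l-1) \<or> y = p (Suc l)" for y using that ty Xtype by auto
      have tP: "\<tau> y \<in> {i,j}" if "y \<in> {p (l-1), p (Suc l)}" for y using that ty by auto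
      have oA: "D (z-1) \<in> {p (l-1), p (Suc l)} \<or> D (z-1) \<in> X" using opts by blast
      have oB: "D (z+1) \<in> {p (l-1), p (Suc l)} \<or> D (z+1) \<in> X" using opts by blast
      have "D (z-1) \<in> {p (l-1), p (Suc l)}"
      proof (rule ccontr)
        assume "D (z-1) \<notin> {p (l-1), p (Suc l)}"
        then have "D (z-1) \<in> X" using oA by blast
        then have "D (z+1) \<in> {p (l-1), p (Suc l)}" using notX oB by blast
        then have "\<tau> (D (z+1)) \<in> {i,j}" by (rule tP)
        then show False using teq Xtype[OF \<open>D (z-1) \<in> X\<close>] by auto
      qed
      moreover have "D (z+1) \<in> {p (l-1), p (Suc l)}"
      proof (rule ccontr)
        assume "D (z+1) \<notin> {p (l-1), p (Suc l)}"
        then have "D (z+1) \<in> X" using oB by blast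
        then have "D (z-1) \<in> {p (l-1), p (Suc l)}" using notX oA by blast
        then have "\<tau> (D (z-1)) \<in> {i,j}" by (rule tP)
        then show False using teq Xtype[OF \<open>D (z+1) \<in> X\<close>] by auto
      qed
      ultimately show ?thesis using ne by auto
    qed
    have r: "D (int k) = p l0" using D0 k l0 by simp
    obtain s where "(\<forall>k\<le>n. D (s + int k) = p k) \<or> (\<forall>k\<le>n. D (- (s + int k)) = p k)"
      using absorb[OF ne2 H r l0(1,2)] by blast
    then show ?thesis
    proof
      assume "\<forall>k\<le>n. D (s + int k) = p k"
      then show ?thesis using finish[OF L3, of D S s] Dmod Dadj DS Ssub by blast
    next
      assume A: "\<forall>k\<le>n. D (- (s + int k)) = p k"
      define E where "E z = D (- z)" for z
      have Emod: "E x = E y \<longleftrightarrow> x mod int L = y mod int L" for x y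
      proof -
        have "E x = E y \<longleftrightarrow> (- x) mod int L = (- y) mod int L" unfolding E_def using Dmod by blast
        also have "\<dots> \<longleftrightarrow> int L dvd (- x - - y)" by (rule mod_eq_dvd_iff)
        also have "\<dots> \<longleftrightarrow> int L dvd (x - y)" by (metis dvd_minus_iff minus_diff_eq minus_diff_minus)
        also have "\<dots> \<longleftrightarrow> x mod int L = y mod int L" by (rule mod_eq_dvd_iff[symmetric])
        finally show ?thesis .
      qed
      have Eadj: "iedge inc' (E z) (E (z+1))" for z
      proof -
        have "- (z + 1) = - z - 1" by simp
        then show ?thesis using adjsym[of "-z"] unfolding E_def by metis
      qed
      show ?thesis using finish[OF L3 Emod Eadj, of S s] DS Ssub A unfolding E_def by blast
    qed
  qed
qed

end



lemma pair_eq: "x \<in> {a,b} \<Longrightarrow> y \<in> {a,b} \<Longrightarrow> x \<in> {i,j} \<Longrightarrow> y \<in> {i,j} \<Longrightarrow> x \<noteq> y \<Longrightarrow> {a,b} = {i,j}"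
  by auto

lemma enat_2_less: "4 \<le> (x::enat) \<Longrightarrow> enat 2 < x"
  by (cases x) (auto simp: numeral_eq_enat)

lemma ge4_cadj: "a \<noteq> b \<Longrightarrow> 4 \<le> m a b \<Longrightarrow> cadj m a b"
  unfolding cadj_def by (cases "m a b") (auto simp: numeral_eq_enat)

context pext begin

lemma abij:
  assumes "p 0 \<in> S" "p 1 \<in> S" "\<forall>v\<in>S. \<tau> v \<in> {a, b}"
  shows "{a,b} = {i,j}"
proof -
  have h5: "\<tau> (p 0) \<noteq> \<tau> (p 1)" using palt[of 0] n2 by simp
  have h3: "\<tau> (p 0) \<in> {i,j}" and h4: "\<tau> (p 1) \<in> {i,j}" using ptype n2 by auto
  have h1: "\<tau> (p 0) \<in> {a,b}" and h2: "\<tau> (p 1) \<in> {a,b}" using assms by blast+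
  show ?thesis by (rule pair_eq[OF h1 h2 h3 h4 h5])
qed

theorem D': "propD I m V' \<tau> inc'"
  unfolding propD_def
proof (intro ballI impI)
  fix a b assume ab: "a \<in> I" "b \<in> I" "a \<noteq> b \<and> 4 \<le> m a b"
  let ?S = "restrict_types V' \<tau> {a, b}"
  show "without_gons ?S inc' 2"
    unfolding without_gons_def
  proof
    assume cyc: "has_cycle ?S inc' (2 * 2)"
    have cj: "cadj m a b" using ab by (intro ge4_cadj) auto
    have Ssub: "?S \<subseteq> V'" and St: "\<forall>v\<in>?S. \<tau> v \<in> {a, b}" unfolding restrict_types_def by auto
    from cycle_new[OF cyc Ssub St cj ab(1,2)]
    show False
    proof
      assume "has_cycle (?S \<inter> V) inc (2 * 2)"
      moreover have "?S \<inter> V \<subseteq> restrict_types V \<tau> {a, b}" unfolding restrict_types_def by auto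
      ultimately have "has_cycle (restrict_types V \<tau> {a, b}) inc (2 * 2)" by (rule has_cycle_mono)
      then show False using D ab unfolding propD_def without_gons_def by blast
    next
      assume B: "n < 2 * 2 \<and> p ` {..n} \<subseteq> ?S \<and> walk (?S \<inter> V) inc (p n) (p 0) (2 * 2 - n)"
      then have "p 0 \<in> ?S" "p 1 \<in> ?S" using n2 by auto
      then have abij: "{a,b} = {i,j}" using abij St by blast
      have mij: "m i j = m a b" using abij m_sym[OF cox iI jI] by (metis doubleton_eq_iff)
      then have "n \<noteq> 2" using n2m3 ab by (auto simp: numeral_eq_enat)
      then have n3: "n = 3" using B n2 by auto
      have w1: "walk (?S \<inter> V) inc (p n) (p 0) 1" using B n3 by simp
      then have "iedge inc (p n) (p 0)" unfolding walk_def by force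
      then have e: "iedge inc (p 0) (p n)" using p0V pnV incsymV unfolding iedge_def by auto
      define q' where "q' k = (if k = 0 then p 0 else p n)" for k :: nat
      have "walk (restrict_types (residue V inc X) \<tau> {i, j}) inc (p 0) (p n) 1"
        unfolding walk_def using xR yR e by (intro exI[of _ q']) (auto simp: q'_def)
      moreover have "enat 2 < m i j" using mij ab enat_2_less by auto
      ultimately show False using nowalk[of 2 1] n3 by simp
    qed
  qed
qed

end


context pext begin

lemma resS:
  assumes "v \<in> restrict_types (residue V' inc' X') \<tau> {a, b}"
  shows "v \<in> V'" "v \<notin> X'" "\<forall>x\<in>X'. inc' v x" "\<tau> v \<in> {a,b}"
  using assms unfolding restrict_types_def residue_def by auto

lemma caseB:
  assumes ab: "a \<in> I" "b \<in> I" "cadj m a b"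
    and gf: "good_flag_for I m V' \<tau> inc' a b X'" and tlt: "enat t < m a b"
    and B: "n < 2 * t" "p ` {..n} \<subseteq> restrict_types (residue V' inc' X') \<tau> {a, b}"
      "walk (restrict_types (residue V' inc' X') \<tau> {a, b} \<inter> V) inc (p n) (p 0) (2 * t - n)"
  shows False
proof -
  let ?S = "restrict_types (residue V' inc' X') \<tau> {a, b}"
  let ?R = "restrict_types (residue V inc X) \<tau> {i, j}"
  have pS: "p k \<in> ?S" if "k \<le> n" for k using B(2) that by auto
  have St: "\<forall>v\<in>?S. \<tau> v \<in> {a,b}" using resS by blast
  have abij: "{a,b} = {i,j}" using abij[OF pS pS St] n2 by auto
  have mij: "m i j = m a b" using abij m_sym[OF cox iI jI] by (metis doubleton_eq_iff)
  have X'V': "X' \<subseteq> V'" and nb: "\<forall>k\<in>I - {a, b}. cadj m a k \<or> cadj m b k \<longrightarrow> k \<in> \<tau> ` X'"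
    using gf unfolding good_flag_for_def flag_def by auto
  have cadj_ij: "cadj m a k \<or> cadj m b k \<longleftrightarrow> cadj m i k \<or> cadj m j k" for k
    using abij by (metis doubleton_eq_iff)
  have key: "w \<in> X'" if w: "w \<in> X" "cadj m i (\<tau> w) \<or> cadj m j (\<tau> w)" for w
  proof -
    let ?k = "\<tau> w"
    have wV: "w \<in> V" using w XV by blast
    have kI: "?k \<in> I" using VI wV by blast
    have kij: "?k \<noteq> i" "?k \<noteq> j" using Xtype w by auto
    have "?k \<in> \<tau> ` X'" using nb kI kij abij w(2) cadj_ij by auto
    then obtain z where z: "z \<in> X'" "\<tau> z = ?k" by (metis imageE)
    have zV': "z \<in> V'" using z X'V' by blast
    have zV: "z \<in> V"
    proof (rule ccontr)
      assume "z \<notin> V"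
      then obtain l where "1 \<le> l" "l < n" "z = p l" using zV' V'cases by blast
      then show False using ptype[of l] z kij by auto
    qed
    have viaNew: "z \<in> X" if l: "1 \<le> l" "l < n" "cadj m (\<tau> (p l)) ?k" for l
    proof -
      have "inc' (p l) z" using resS(3)[OF pS[of l]] z l by auto
      moreover have "z \<noteq> p l" using zV pnew l by auto
      ultimately have o: "z = p (l - 1) \<or> z = p (Suc l) \<or> z \<in> X \<or> (\<tau> (p l) \<noteq> \<tau> z \<and> \<not> cadj m (\<tau> (p l)) (\<tau> z))"
        using newinc[OF l(1,2) zV'] by blast
      have "\<tau> (p (l-1)) \<in> {i,j}" "\<tau> (p (Suc l)) \<in> {i,j}" using ptype l by auto
      then show ?thesis using o z kij l(3) by auto
    qed
    have zX: "z \<in> X"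
    proof (cases "cadj m (\<tau> (p 1)) ?k \<or> (3 \<le> n \<and> cadj m (\<tau> (p 2)) ?k)")
      case True
      then show ?thesis using viaNew[of 1] viaNew[of 2] n2 by auto
    next
      case False
      have t01: "\<tau> (p 0) \<noteq> \<tau> (p 1)" using palt[of 0] n2 by simp
      have t12: "\<tau> (p 1) \<noteq> \<tau> (p 2)"
      proof -
        have "Suc 1 = (2::nat)" by simp
        then show ?thesis using palt[of 1] n2 by (simp add: numeral_2_eq_2)
      qed
      have t0: "\<tau> (p 0) \<in> {i,j}" and t1: "\<tau> (p 1) \<in> {i,j}" using ptype n2 by auto
      have c0: "cadj m (\<tau> (p 0)) ?k"
        using w(2) False t01 t0 t1 by auto
      have n2': "n = 2"
      proof (rule ccontr)
        assume "n \<noteq> 2"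
        then have "3 \<le> n" using n2 by auto
        moreover have "\<tau> (p 2) = \<tau> (p 0)"
          using t12 ptype[of 2] t01 t0 t1 \<open>3 \<le> n\<close> by auto
        ultimately show False using False c0 by auto
      qed
      let ?s = "\<tau> (p 0)" and ?s' = "\<tau> (p 1)"
      have sI: "?s \<in> I" "?s' \<in> I" using t0 t1 iI jI by auto
      have m3: "m ?s ?s' = 3" using n2m3[OF n2'] t01 t0 t1 m_sym[OF cox iI jI] by auto
      have nc1: "\<not> cadj m ?s' ?k" using False by auto
      have m2: "m ?s' ?k = 2" using noncadj_2[OF cox sI(2) kI _ nc1] kij t1 by auto
      have "m ?s ?k \<noteq> 3"
      proof
        assume m3': "m ?s ?k = 3"
        have "m ?k ?s = 3" using m3' m_sym[OF cox sI(1) kI] by simp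
        moreover have "m ?k ?s' = 2" using m2 m_sym[OF cox sI(2) kI] by simp
        moreover have "?k \<noteq> ?s" "?s \<noteq> ?s'" "?k \<noteq> ?s'" using kij t0 t1 t01 by auto
        ultimately show False using noA3 kI sI m3 unfolding no_A3_def by blast
      qed
      then have m4: "4 \<le> m ?s ?k" using cadj_not3[OF c0] by blast
      have t2: "\<tau> (p 2) = ?s" using t12 ptype[of 2] t01 t0 t1 n2' by auto
      have p2S: "p 2 \<in> ?S" using pS n2' by auto
      have incs: "inc (p 0) z" "inc (p 2) z"
        using resS(3)[OF pS[of 0]] resS(3)[OF p2S] z zV p0V pnV n2' inc'_old by auto
      have incw: "inc (p 0) w" "inc (p 2) w" using xR yR w n2' unfolding restrict_types_def residue_def by auto
      show ?thesis
      proof (rule ccontr)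
        assume "z \<notin> X"
        then have zw: "z \<noteq> w" using w by auto
        let ?T = "restrict_types V \<tau> {?s, ?k}"
        have "has_cycle ?T inc 4"
        proof (rule cycle4)
          show "p 0 \<in> ?T" "z \<in> ?T" "p 2 \<in> ?T" "w \<in> ?T"
            unfolding restrict_types_def using p0V zV pnV n2' wV t2 z by auto
          show "p 0 \<noteq> z" "p 0 \<noteq> w" "z \<noteq> p 2" "p 2 \<noteq> w" using z t0 t2 kij by auto
          show "p 0 \<noteq> p 2" using xy n2' by auto
          show "z \<noteq> w" by (rule zw)
          show "inc (p 0) z" "inc z (p 2)" "inc (p 2) w" "inc w (p 0)"
            using incs incw incsymV p0V pnV n2' zV wV by auto
        qed
        moreover have "?s \<noteq> ?k" using kij t0 by auto
        ultimately show False using D sI(1) kI m4 unfolding propD_def without_gons_def by auto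
      qed
    qed
    then have "z = w" using Xuniq z w by auto
    then show ?thesis using z by simp
  qed
  have SR: "?S \<inter> V \<subseteq> ?R"
  proof
    fix v assume v: "v \<in> ?S \<inter> V"
    have tv: "\<tau> v \<in> {i,j}" using resS(4)[of v] v abij by auto
    have "inc v w" if w: "w \<in> X" for w
    proof (cases "cadj m (\<tau> v) (\<tau> w)")
      case True
      then have "cadj m i (\<tau> w) \<or> cadj m j (\<tau> w)" using tv by auto
      then have "w \<in> X'" using key w by blast
      then have "inc' v w" using resS(3)[of v] v by blast
      then show ?thesis using inc'_old v w XV by auto
    next
      case False
      moreover have "\<tau> v \<noteq> \<tau> w" using tv Xtype[OF w] by auto
      ultimately show ?thesis using F v w XV unfolding propF_def by blast
    qed
    moreover have "v \<notin> X" using tv Xtype by auto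
    ultimately show "v \<in> ?R" using v tv unfolding restrict_types_def residue_def by auto
  qed
  have "walk ?R inc (p n) (p 0) (2 * t - n)" using walk_mono[OF B(3) SR] .
  then have "walk ?R inc (p 0) (p n) (2 * t - n)"
    by (rule walk_rev) (use incsymV in \<open>auto simp: restrict_types_def residue_def\<close>)
  moreover have "enat t < m i j" using tlt mij by simp
  ultimately show False using nowalk[of t "2 * t - n"] B(1) by simp
qed

end


context pext begin

lemma caseA:
  assumes ab: "a \<in> I" "b \<in> I" "cadj m a b"
    and gf: "good_flag_for I m V' \<tau> inc' a b X'" and tlt: "enat t < m a b"
    and A: "has_cycle (restrict_types (residue V' inc' X') \<tau> {a, b} \<inter> V) inc (2 * t)"
  shows False
proof -
  let ?S = "restrict_types (residue V' inc' X') \<tau> {a, b}"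
  let ?L = "2 * t"
  have X'V': "X' \<subseteq> V'" and X'inc: "\<forall>x\<in>X'. \<forall>y\<in>X'. inc' x y"
    and aX: "a \<notin> \<tau> ` X'" and bX: "b \<notin> \<tau> ` X'"
    and nb: "\<forall>k\<in>I - {a, b}. cadj m a k \<or> cadj m b k \<longrightarrow> k \<in> \<tau> ` X'"
    using gf unfolding good_flag_for_def flag_def by auto
  have anb: "a \<noteq> b" using ab unfolding cadj_def by auto
  show False
  proof (cases "\<exists>q\<in>X'. q \<notin> V \<and> (cadj m (\<tau> q) a \<or> cadj m (\<tau> q) b)")
    case True
    then obtain q where q: "q \<in> X'" "q \<notin> V" "cadj m (\<tau> q) a \<or> cadj m (\<tau> q) b" by blast
    then obtain l where l: "1 \<le> l" "l < n" "q = p l" using X'V' V'cases by blast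
    let ?s = "\<tau> q"
    have sij: "?s \<in> {i,j}" using ptype l by auto
    have sI: "?s \<in> I" using sij iI jI by auto
    have sab: "?s \<noteq> a" "?s \<noteq> b" using aX bX q by auto
    from A obtain c where L3: "3 \<le> ?L" and inj: "inj_on c {..<?L}" and img: "c ` {..<?L} \<subseteq> ?S \<inter> V"
      and e: "\<forall>k<?L. iedge inc (c k) (c (Suc k mod ?L))" unfolding has_cycle_def by blast
    obtain D where DS: "\<forall>z. D z \<in> ?S \<inter> V"
      and Dadj: "\<forall>z. iedge inc (D z) (D (z+1))" and Dmod: "\<forall>a b. D a = D b \<longleftrightarrow> a mod int ?L = b mod int ?L"
      using cyc_D[OF L3 inj img e] by blast
    have Dne: "D x \<noteq> D y" if "0 < y - x" "y - x < int ?L" for x y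
    proof
      assume "D x = D y"
      then have "x mod int ?L = y mod int ?L" using Dmod by blast
      then have "int ?L dvd (y - x)" using mod_eq_dvd_iff by metis
      then show False using zdvd_imp_le[of "int ?L" "y - x"] that by linarith
    qed
    have DV: "D z \<in> V" for z using DS by blast
    have Dt: "\<tau> (D z) \<in> {a,b}" for z using DS resS(4) by blast
    have Dalt: "\<tau> (D z) \<noteq> \<tau> (D (z+1))" for z
      using Dadj sameV[OF DV DV] unfolding iedge_def by metis
    have Dt2: "\<tau> (D (z+2)) = \<tau> (D z)" for z
    proof -
      have "\<tau> (D (z+1)) \<noteq> \<tau> (D (z+1+1))" by (rule Dalt)
      then have "\<tau> (D (z+1)) \<noteq> \<tau> (D (z+2))" by (simp add: add.assoc)
      then show ?thesis using Dalt[of z] Dt[of z] Dt[of "z+1"] Dt[of "z+2"] by auto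
    qed
    have ne2: "D z \<noteq> D (z+2)" for z
    proof -
      have "(2::int) < int ?L" using L3 by simp
      then show ?thesis by (intro Dne) auto
    qed
    have nbr: "D z = p (l - 1) \<or> D z = p (Suc l) \<or> D z \<in> X" if "cadj m ?s (\<tau> (D z))" for z
    proof -
      have "inc' (D z) q" using resS(3)[of "D z"] DS q by blast
      then have "inc' q (D z)" using inc'_sym X'V' q DS V'eq by blast
      moreover have "D z \<noteq> q" using DV q by auto
      moreover have "D z \<in> V'" using DV V'eq by blast
      ultimately show ?thesis using newinc[OF l(1,2), of "D z"] l(3) that by auto
    qed
    have ty: "\<tau> (p (l-1)) \<in> {i,j}" "\<tau> (p (Suc l)) \<in> {i,j}" using ptype l by auto
    have ex: "\<exists>z. \<tau> (D z) = u" if "u \<in> {a,b}" for u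
    proof -
      have "\<tau> (D 0) \<noteq> \<tau> (D 1)" using Dalt[of 0] by simp
      then have "\<tau> (D 0) = u \<or> \<tau> (D 1) = u" using Dt[of 0] Dt[of 1] that by auto
      then show ?thesis by blast
    qed
    have claim1: "u \<in> {i,j}" if u: "u \<in> {a,b}" "cadj m ?s u" for u
    proof (rule ccontr)
      assume nu: "u \<notin> {i,j}"
      obtain z where z: "\<tau> (D z) = u" using ex u by blast
      have z2: "\<tau> (D (z+2)) = u" using Dt2 z by simp
      have "D z \<in> X" using nbr[of z] z u ty nu by auto
      moreover have "D (z+2) \<in> X" using nbr[of "z+2"] z2 u ty nu by auto
      ultimately show False using Xuniq z z2 ne2 by metis
    qed
    have claim2: "n = 2 \<and> ?L = 4" if u: "u \<in> {a,b}" "cadj m ?s u" for u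
    proof -
      have uij: "u \<in> {i,j}" using claim1 u by blast
      obtain z where z: "\<tau> (D z) = u" using ex u by blast
      have inP: "D y \<in> {p (l - 1), p (Suc l)}" if "\<tau> (D y) = u" for y
        using nbr[of y] that u Xtype uij by auto
      have z2: "\<tau> (D (z+2)) = u" using Dt2 z by simp
      have z4: "\<tau> (D (z+2+2)) = u" using Dt2 z2 by metis
      have P1: "D z \<in> {p (l - 1), p (Suc l)}" and P2: "D (z+2) \<in> {p (l - 1), p (Suc l)}"
        using inP z z2 by auto
      have both: "p (l-1) \<in> V \<and> p (Suc l) \<in> V"
        using P1 P2 ne2[of z] DV[of z] DV[of "z+2"] by auto
      have l1: "l = 1"
      proof (rule ccontr)
        assume "l \<noteq> 1"
        then have "1 \<le> l - 1" "l - 1 < n" using l by auto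
        then show False using pnew both by blast
      qed
      have nn: "n = 2"
      proof (rule ccontr)
        assume "n \<noteq> 2"
        then have "1 \<le> Suc l" "Suc l < n" using l l1 by auto
        then show False using pnew both by blast
      qed
      have "?L = 4"
      proof (rule ccontr)
        assume "?L \<noteq> 4"
        then have "5 \<le> ?L" using L3 by presburger
        then have "(4::int) < int ?L" by simp
        then have "D z \<noteq> D (z+2+2)" by (intro Dne) auto
        moreover have "D (z+2+2) \<in> {p (l - 1), p (Suc l)}" using inP z4 by blast
        moreover have "D z \<noteq> D (z+2)" by (rule ne2)
        moreover have "D (z+2) \<noteq> D (z+2+2)" by (rule ne2)
        ultimately show False using P1 P2 by auto
      qed
      then show ?thesis using nn by simp
    qed
    obtain u where u: "u \<in> {a,b}" "cadj m ?s u"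
      using q cadj_sym[OF cox sI] ab by blast
    obtain w' where w': "{u, w'} = {a,b}" "u \<noteq> w'" using u anb by blast
    have n2': "n = 2" and L4: "?L = 4" using claim2 u by auto
    have uij: "u \<in> {i,j}" using claim1 u by blast
    have uI: "u \<in> I" "w' \<in> I" using w' ab by auto
    have ncw: "\<not> cadj m ?s w'"
    proof
      assume "cadj m ?s w'"
      then have "w' \<in> {i,j}" using claim1 w' by blast
      then have "{u, w'} = {i,j}" using uij w' ij by auto
      then show False using sij sab w' by auto
    qed
    have su: "?s \<noteq> u" using sab u by auto
    have m3: "m ?s u = 3" using n2m3[OF n2'] sij uij su m_sym[OF cox iI jI] by auto
    have cuw: "cadj m u w'" using ab w' cadj_sym[OF cox ab(1,2)] by (metis doubleton_eq_iff)
    have sw: "?s \<noteq> w'" using sab w' by auto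
    have m2: "m ?s w' = 2" using noncadj_2[OF cox sI uI(2) sw ncw] .
    show False
    proof (cases "m u w' = 3")
      case True
      then show False using noA3 sI uI m3 m2 su sw w'(2) unfolding no_A3_def by blast
    next
      case False
      then have m4: "4 \<le> m u w'" using cadj_not3[OF cuw] by blast
      have "?S \<inter> V \<subseteq> restrict_types V \<tau> {u, w'}" using w'(1) unfolding restrict_types_def by auto
      then have "has_cycle (restrict_types V \<tau> {u, w'}) inc 4" using has_cycle_mono[OF A] L4 by simp
      then show False using D uI m4 w'(2) unfolding propD_def without_gons_def by auto
    qed
  next
    case False
    let ?X = "X' \<inter> V"
    have gfV: "good_flag_for I m V \<tau> inc a b ?X"
      unfolding good_flag_for_def flag_def
    proof (intro conjI ballI impI)
      show "?X \<subseteq> V" by blast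
      show "inc x y" if "x \<in> ?X" "y \<in> ?X" for x y using that X'inc inc'_old by auto
      show "a \<notin> \<tau> ` ?X" "b \<notin> \<tau> ` ?X" using aX bX by auto
      fix k assume k: "k \<in> I - {a, b}" "cadj m a k \<or> cadj m b k"
      then have "k \<in> \<tau> ` X'" using nb by blast
      then obtain z where z: "z \<in> X'" "\<tau> z = k" by (metis imageE)
      have "z \<in> V"
      proof (rule ccontr)
        assume "z \<notin> V"
        moreover have "cadj m (\<tau> z) a \<or> cadj m (\<tau> z) b"
          using k z cadj_sym[OF cox] ab by auto
        ultimately show False using False z by blast
      qed
      then show "k \<in> \<tau> ` ?X" using z by blast
    qed
    have "?S \<inter> V \<subseteq> restrict_types (residue V inc ?X) \<tau> {a, b}"
    proof
      fix v assume v: "v \<in> ?S \<inter> V"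
      have "inc v x" if "x \<in> ?X" for x
      proof -
        have "inc' v x" using resS(3)[of v X' a b] v that by blast
        then show ?thesis using inc'_old[of v x] v that by blast
      qed
      then show "v \<in> restrict_types (residue V inc ?X) \<tau> {a, b}"
        using v resS(2,4)[of v] unfolding restrict_types_def residue_def by auto
    qed
    then have "has_cycle (restrict_types (residue V inc ?X) \<tau> {a, b}) inc (2 * t)"
      using has_cycle_mono[OF A] by blast
    then show False using P ab gfV tlt unfolding propP_def without_gons_def by blast
  qed
qed

theorem P': "propP I m V' \<tau> inc'"
  unfolding propP_def
proof (intro ballI impI allI)
  fix a b X' t
  assume ab: "a \<in> I" "b \<in> I" "cadj m a b" and gf: "good_flag_for I m V' \<tau> inc' a b X'"
    and tlt: "enat t < m a b"
  let ?S = "restrict_types (residue V' inc' X') \<tau> {a, b}"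
  show "without_gons ?S inc' t"
    unfolding without_gons_def
  proof
    assume cyc: "has_cycle ?S inc' (2 * t)"
    have Ssub: "?S \<subseteq> V'" and St: "\<forall>v\<in>?S. \<tau> v \<in> {a,b}" using resS by blast+
    from cycle_new[OF cyc Ssub St ab(3,1,2)]
    show False
    proof
      assume "has_cycle (?S \<inter> V) inc (2 * t)"
      then show False using caseA[OF ab gf tlt] by blast
    next
      assume "n < 2 * t \<and> p ` {..n} \<subseteq> ?S \<and> walk (?S \<inter> V) inc (p n) (p 0) (2 * t - n)"
      then show False using caseB[OF ab gf tlt] by blast
    qed
  qed
qed

end



lemma walk0: "x \<in> S \<Longrightarrow> walk S R x x 0"
  unfolding walk_def by (intro exI[of _ "\<lambda>_. x"]) auto

theorem mainTheorem3:
  fixes I :: "'i set" and m :: "'i \<Rightarrow> 'i \<Rightarrow> enat"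
    and V V' :: "'v set" and \<tau> :: "'v \<Rightarrow> 'i" and inc inc' :: "'v \<Rightarrow> 'v \<Rightarrow> bool"
  assumes "coxeter_diagram I m"
    and "diagram_connected I m"
    and "no_A3 I m"
    and "geometry I V \<tau> inc"
    and "propF I m V \<tau> inc" and "propP I m V \<tau> inc" and "propD I m V \<tau> inc"
    and "procedureB I m V \<tau> inc V' inc' \<or> procedureC I m V \<tau> inc V' inc'"
  shows "propF I m V' \<tau> inc' \<and> propP I m V' \<tau> inc' \<and> propD I m V' \<tau> inc'"
  using assms(8)
proof
  assume "procedureB I m V \<tau> inc V' inc'"
  then obtain i j X x y mm p where iI: "i \<in> I" and jI: "j \<in> I" and cj: "cadj m i j"
    and mm: "m i j = enat mm" and gf: "good_flag_for I m V \<tau> inc i j X"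
    and xR: "x \<in> restrict_types (residue V inc X) \<tau> {i, j}"
    and yR: "y \<in> restrict_types (residue V inc X) \<tau> {i, j}"
    and nw: "\<forall>n\<le>mm. \<not> walk (restrict_types (residue V inc X) \<tau> {i, j}) inc x y n"
    and p0: "p 0 = x" and pn: "p (mm - 1) = y"
    and pe: "path_extension I m V \<tau> inc X i j p (mm - 1) V' inc'"
    unfolding procedureB_def by blast
  have mm3: "3 \<le> mm" using cj mm unfolding cadj_def by (simp add: numeral_eq_enat)
  have ij: "i \<noteq> j" using cj unfolding cadj_def by simp
  have xy: "x \<noteq> y"
  proof
    assume "x = y"
    then have "walk (restrict_types (residue V inc X) \<tau> {i, j}) inc x y 0" using walk0 xR by metis
    then show False using nw by blast
  qed
  interpret pext I m V \<tau> inc X i j p "mm - 1" V' inc'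
  proof
    show "flag V inc X" "i \<notin> \<tau> ` X" "j \<notin> \<tau> ` X" using gf unfolding good_flag_for_def by auto
    show "2 \<le> mm - 1" using mm3 by simp
    show "p 0 \<noteq> p (mm - 1)" using xy p0 pn by simp
    show "m i j = 3" if "mm - 1 = 2" using that mm by (simp add: numeral_eq_enat)
    show "p 0 \<in> restrict_types (residue V inc X) \<tau> {i, j}" "p (mm - 1) \<in> restrict_types (residue V inc X) \<tau> {i, j}"
      using xR yR p0 pn by auto
    show "\<not> walk (restrict_types (residue V inc X) \<tau> {i, j}) inc (p 0) (p (mm - 1)) l"
      if "enat t < m i j" "l + (mm - 1) = 2 * t" for t l
    proof -
      have "t < mm" using that mm by simp
      then have "l \<le> mm" using that mm3 by linarith
      then show ?thesis using nw p0 pn by blast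
    qed
  qed (use assms pe iI jI ij in auto)
  show ?thesis using F' P' D' by blast
next
  assume "procedureC I m V \<tau> inc V' inc'"
  then obtain X i j x y n p where Xf: "flag V inc X" and iX: "i \<in> I - \<tau> ` X" and jX: "j \<in> I - \<tau> ` X"
    and ij: "i \<noteq> j" and xres: "x \<in> residue V inc X" and yres: "y \<in> residue V inc X"
    and tx: "\<tau> x \<in> {i, j}" and ty: "\<tau> y \<in> {i, j}"
    and nw: "\<forall>l. \<not> walk (residue V inc X) inc x y l" and n4: "4 \<le> n"
    and p0: "p 0 = x" and pn: "p n = y"
    and pe: "path_extension I m V \<tau> inc X i j p n V' inc'"
    unfolding procedureC_def by blast
  have xR: "x \<in> restrict_types (residue V inc X) \<tau> {i, j}" and yR: "y \<in> restrict_types (residue V inc X) \<tau> {i, j}"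
    using xres yres tx ty unfolding restrict_types_def by auto
  have xy: "x \<noteq> y"
  proof
    assume "x = y"
    then have "walk (residue V inc X) inc x y 0" using walk0 xres by metis
    then show False using nw by blast
  qed
  have sub: "restrict_types (residue V inc X) \<tau> {i, j} \<subseteq> residue V inc X"
    unfolding restrict_types_def by auto
  interpret pext I m V \<tau> inc X i j p n V' inc'
  proof
    show "2 \<le> n" using n4 by simp
    show "p 0 \<noteq> p n" using xy p0 pn by simp
    show "m i j = 3" if "n = 2" using that n4 by simp
    show "p 0 \<in> restrict_types (residue V inc X) \<tau> {i, j}" "p n \<in> restrict_types (residue V inc X) \<tau> {i, j}"
      using xR yR p0 pn by auto
    show "\<not> walk (restrict_types (residue V inc X) \<tau> {i, j}) inc (p 0) (p n) l" for l
      using nw p0 pn walk_mono[OF _ sub] by blast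
  qed (use assms pe iX jX ij Xf in auto)
  show ?thesis using F' P' D' by blast
qed


end
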